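(* For any real $x>1/4$ we have $$\sum_{k=0}^\infty\frac{2(4x+1)k-2x+1}{x^{2k}\binom{4k}{2k}}=\frac{8x^2}{(4x-1)^2}\left(\frac3{\sqrt{4x-1}}\operatorname{arccot}\sqrt{4x-1}-4x+4\right)$$ and $$\sum_{k=0}^\infty\frac{2(4x-1)k-2x-1}{x^{2k}\binom{4k}{2k}}=\frac{8x^2}{(4x+1)^2}\left(\frac{3R(4x+1)}{4x+1}-4x-4\right).$$ Consequently, \begin{align*} \sum_{k=0}^\infty\frac{10k-1}{\binom{4k}{2k}}&=\frac{4\sqrt3}{27}\pi,\\ \sum_{k=0}^\infty\frac{k4^k}{\binom{4k}{2k}}&=\frac{3\pi+8}{12},\\ \sum_{k=0}^\infty\frac{(14k+1)9^k}{\binom{4k}{2k}}&=24\pi\sqrt3+64,\\ \sum_{k=0}^\infty\frac{(22k-1)9^k}{4^k\binom{4k}{2k}}&=\frac{32}{25}\left(4+\frac{27}{\sqrt{15}}\arctan\sqrt{\frac35}\right),\\ \sum_{k=0}^\infty\frac{14k-5}{4^k\binom{4k}{2k}}&=\frac{16}{81}(\log2-24). \end{align*}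
   Context: For real $x$ with $x>1$ or $x<0$, define $R(x)=\sqrt x\,\operatorname{arctanh}\frac1{\sqrt x}$, i.e. $R(x)=\frac{\sqrt x}2\log\frac{\sqrt x+1}{\sqrt x-1}$ if $x>1$ and $R(x)=\sqrt{|x|}\arctan\frac1{\sqrt{|x|}}$ if $x<0$. For $y>0$, $\operatorname{arccot} y=\arctan(1/y)\in(0,\pi/2)$. *)

theory Defs
  imports Complex_Main
begin

text \<open>R(x) = sqrt x * arctanh (1/sqrt x), for x > 1 or x < 0.\<close>
definition R :: "real \<Rightarrow> real" where
  "R x = (if x > 1 then sqrt x / 2 * ln ((sqrt x + 1) / (sqrt x - 1))
          else sqrt \<bar>x\<bar> * arctan (1 / sqrt \<bar>x\<bar>))"

definition arccot :: "real \<Rightarrow> real" where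
  "arccot y = arctan (1 / y)"

end

theory Submission
  imports Defs
begin

lemma cb_rec: "Suc n * (Suc (Suc (2*n)) choose Suc n) = 2 * (2*n+1) * ((2*n) choose n)"
proof -
  have 1: "Suc n * (Suc (Suc (2*n)) choose Suc n) = Suc (Suc (2*n)) * (Suc (2*n) choose n)"
    using Suc_times_binomial_eq[of "Suc (2*n)" n] by (simp add: mult.commute del: binomial_Suc_Suc)
  have 2: "Suc n * (Suc (2*n) choose n) = Suc (2*n) * (2*n choose n)"
  proof -
    have "Suc (2*n) choose n = Suc (2*n) choose Suc n"
      using binomial_symmetric[of n "Suc (2*n)"] by simp
    then show ?thesis using Suc_times_binomial_eq[of "2*n" n] by (simp add: mult.commute del: binomial_Suc_Suc)
  qed
  define B where "B = (Suc (Suc (2*n)) choose Suc n)"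
  define C1 where "C1 = (Suc (2*n) choose n)"
  define C where "C = ((2*n) choose n)"
  have h1: "Suc n * B = Suc (Suc (2*n)) * C1" using 1 unfolding B_def C1_def .
  have h2: "Suc n * C1 = Suc (2*n) * C" using 2 unfolding C1_def C_def .
  have "Suc n * (Suc n * B) = Suc (Suc (2*n)) * (Suc n * C1)" using h1 by (simp only: ac_simps)
  also have "\<dots> = Suc n * (2 * (2*n+1) * C)" unfolding h2 by simp
  finally have "Suc n * B = 2 * (2*n+1) * C" by (simp only: mult_left_cancel)
  then show ?thesis unfolding B_def C_def .
qed

definition a :: "nat \<Rightarrow> real" where "a n = 1 / real ((2*n) choose n)"

lemma cb_pos: "(2*n) choose n > 0" by simp

lemma a_rec: "2 * (2 * real n + 1) * a (Suc n) = real (Suc n) * a n"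
proof -
  define p where "p = real (2 * Suc n choose Suc n)"
  define q where "q = real (2 * n choose n)"
  have "2 * Suc n = Suc (Suc (2*n))" by simp
  then have "real (Suc n) * p = 2 * (2*real n+1) * q"
    unfolding p_def q_def using arg_cong[OF cb_rec[of n], of real] by (simp only: of_nat_mult) simp
  moreover have "p > 0" "q > 0" unfolding p_def q_def by (simp_all del: binomial_Suc_Suc)
  ultimately show ?thesis unfolding a_def p_def[symmetric] q_def[symmetric]
    by (simp add: field_simps)
qed

lemma a_pos: "a n > 0" unfolding a_def by simp

lemma summ_a:
  assumes w: "\<bar>w\<bar> < 4"
  shows "summable (\<lambda>n. a n * w^n)"
proof -
  define c where "c = (\<bar>w\<bar> + 4) / 8"
  have c1: "c < 1" unfolding c_def using w by simp
  have pos: "8 - 2 * \<bar>w\<bar> > 0" using w by simp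
  obtain N :: nat where N: "8 / (8 - 2 * \<bar>w\<bar>) < real N" using reals_Archimedean2 by blast
  have NN: "8 < real N * (8 - 2 * \<bar>w\<bar>)" using N pos by (simp add: divide_less_eq)
  show ?thesis
  proof (rule summable_ratio_test[OF c1, of N])
    fix n assume n: "N \<le> n"
    have "real N * (8 - 2 * \<bar>w\<bar>) \<le> real n * (8 - 2 * \<bar>w\<bar>)"
      using n pos by (intro mult_right_mono) auto
    then have k: "\<bar>w\<bar> * (real n + 1) \<le> c * (2 * (2 * real n + 1))"
      using NN w unfolding c_def by (simp add: algebra_simps)
    have ar: "a (Suc n) = (real n + 1) * a n / (2 * (2 * real n + 1))"
      using a_rec[of n] by (simp add: field_simps)
    have "norm (a (Suc n) * w ^ Suc n) = (\<bar>w\<bar> * (real n + 1)) / (2 * (2 * real n + 1)) * (a n * \<bar>w\<bar>^n)"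
    proof -
      have "norm (a (Suc n) * w ^ Suc n) = a (Suc n) * \<bar>w\<bar> ^ Suc n"
        using a_pos[of "Suc n"] by (simp add: abs_mult power_abs)
      also have "\<dots> = (\<bar>w\<bar> * (real n + 1)) / (2 * (2 * real n + 1)) * (a n * \<bar>w\<bar>^n)"
        unfolding ar by (simp add: field_simps)
      finally show ?thesis .
    qed
    also have "\<dots> \<le> c * (a n * \<bar>w\<bar>^n)"
      using k a_pos[of n] by (intro mult_right_mono) (auto simp: divide_le_eq)
    also have "\<dots> = c * norm (a n * w ^ n)" using a_pos[of n] by (simp add: abs_mult power_abs)
    finally show "norm (a (Suc n) * w ^ Suc n) \<le> c * norm (a n * w ^ n)" .
  qed
qed

definition F :: "real \<Rightarrow> real" where "F w = (\<Sum>n. a n * w^n)"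
definition D :: "real \<Rightarrow> real" where "D w = (\<Sum>n. diffs a n * w^n)"

lemma F_deriv: "\<bar>w\<bar> < 4 \<Longrightarrow> (F has_real_derivative D w) (at w)"
  unfolding F_def[abs_def] D_def
  by (rule termdiffs_strong'[where K=4]) (auto intro: summ_a)

lemma F0: "F 0 = 1"
  unfolding F_def using powser_zero[of a] by (simp add: a_def)

lemma F_ode:
  assumes w: "\<bar>w\<bar> < 4"
  shows "w * (4 - w) * D w = (w + 2) * F w - 2"
proof -
  have sF: "(\<lambda>n. a n * w^n) sums F w" unfolding F_def using summ_a[OF w] by (simp add: summable_sums)
  have sD: "(\<lambda>n. diffs a n * w^n) sums D w" unfolding D_def
    using termdiff_converges[of w 4 a] summ_a w by (simp add: summable_sums)
  define G where "G n = real n * a n * w^n" for n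
  have "G (Suc n) = w * (diffs a n * w^n)" for n unfolding G_def diffs_def by (simp add: algebra_simps)
  then have "(\<lambda>n. G (Suc n)) sums (w * D w)" using sums_mult[OF sD, of w] by simp
  then have sG: "G sums (w * D w)" using sums_Suc_iff[of G] by (simp add: G_def)
  have sF1: "(\<lambda>n. a (Suc n) * w ^ Suc n) sums (F w - 1)"
    using sums_Suc_iff[of "\<lambda>n. a n * w^n" "F w - 1"] sF by (simp add: a_def)
  have sG1: "(\<lambda>n. G (Suc n)) sums (w * D w)" using sG sums_Suc_iff[of G] by (simp add: G_def)
  have L: "(\<lambda>n. 4 * G (Suc n) - 2 * (a (Suc n) * w ^ Suc n)) sums (4 * (w * D w) - 2 * (F w - 1))"
    by (intro sums_diff sums_mult sG1 sF1)
  have R: "(\<lambda>n. w * G n + w * (a n * w^n)) sums (w * (w * D w) + w * F w)"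
    by (intro sums_add sums_mult sG sF)
  have eq: "4 * G (Suc n) - 2 * (a (Suc n) * w ^ Suc n) = w * G n + w * (a n * w^n)" for n
  proof -
    have "4 * G (Suc n) - 2 * (a (Suc n) * w ^ Suc n) = (2 * (2 * real n + 1) * a (Suc n)) * w ^ Suc n"
      unfolding G_def by (simp add: algebra_simps)
    also have "\<dots> = (real (Suc n) * a n) * w ^ Suc n" by (simp only: a_rec)
    finally show ?thesis unfolding G_def by (simp add: algebra_simps)
  qed
  from L R have "4 * (w * D w) - 2 * (F w - 1) = w * (w * D w) + w * F w"
    unfolding eq using sums_unique2 by blast
  then show ?thesis by (simp add: algebra_simps)
qed


lemma key:
  fixes e :: real and A :: "real \<Rightarrow> real"
  assumes e: "e = 1 \<or> e = -1" and A0: "A 0 = 0"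
    and dA: "\<And>s. 0 \<le> s \<Longrightarrow> s < 2 \<Longrightarrow> (A has_real_derivative (e / sqrt (4 - e* s^2))) (at s)"
    and s: "0 < s" "s < 2"
  shows "F (e* s^2) = 4/(4-e* s^2) + 4* s*A s/((4 - e* s^2)* sqrt(4-e* s^2))"
proof -
  have wlt: "\<bar>e*t^2\<bar> < 4" and pos: "4 - e*t^2 > 0" if "0 \<le> t" "t < 2" for t
  proof -
    have "t^2 < 2^2" using that by (intro power_strict_mono) auto
    moreover have "0 \<le> t^2" by simp
    ultimately show "\<bar>e*t^2\<bar> < 4" "4 - e*t^2 > 0" using e by (auto simp del: zero_le_power2 simp add: abs_if; smt (verit))+
  qed
  define N where "N t = F (e*t^2) * (4-e*t^2) * sqrt (4-e*t^2) - 4 * sqrt (4-e*t^2) - 4*t*A t" for t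
  define N' where "N' t = (D (e*t^2) * (2*e*t)) * (4-e*t^2) * sqrt (4-e*t^2)
     + F (e*t^2) * (-(2*e*t)) * sqrt (4-e*t^2)
     + F (e*t^2) * (4-e*t^2) * (-(2*e*t) / (2 * sqrt (4-e*t^2)))
     - 4 * (-(2*e*t) / (2 * sqrt (4-e*t^2)))
     - (4 * A t + 4 * t * (e / sqrt (4 - e*t^2)))" for t
  have dN: "(N has_real_derivative N' t) (at t)" if t: "0 \<le> t" "t < 2" for t
  proof -
    have dF: "((\<lambda>t. F (e*t^2)) has_real_derivative D (e*t^2) * (2*e*t)) (at t)"
    proof -
      have dg: "((\<lambda>t. e*t^2) has_real_derivative 2*e*t) (at t)" by (auto intro!: derivative_eq_intros)
      show ?thesis using DERIV_chain2[OF F_deriv[OF wlt[OF t]] dg] by simp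
    qed
    have dS: "((\<lambda>t. sqrt (4-e*t^2)) has_real_derivative (-(2*e*t) / (2 * sqrt (4-e*t^2)))) (at t)"
      using pos[OF t] by (auto intro!: derivative_eq_intros simp: field_simps)
    have dP: "((\<lambda>t. 4-e*t^2) has_real_derivative (-(2*e*t))) (at t)"
      by (auto intro!: derivative_eq_intros)
    show ?thesis unfolding N_def[abs_def] N'_def
      by (rule DERIV_cong[OF DERIV_diff[OF DERIV_diff[OF DERIV_mult[OF DERIV_mult[OF dF dP] dS]
          DERIV_cmult[OF dS]] DERIV_mult[OF DERIV_cmult[OF DERIV_ident] dA[OF t]]]]) (simp add: algebra_simps)
  qed
  have rel: "t * N' t = N t" if t: "0 < t" "t < 2" for t
  proof -
    define w where "w = e*t^2"
    define r where "r = sqrt (4 - w)"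
    have rp: "r > 0" unfolding r_def w_def using pos[of t] t by simp
    have r2: "r * r = 4 - w" unfolding r_def using pos[of t] t w_def by simp
    have ode: "w * (4 - w) * D w = (w + 2) * F w - 2" using F_ode wlt[of t] t w_def by simp
    have ee: "e * e = 1" using e by auto
    have "t * N' t = 2 * (w * (4 - w) * D w) * r - 2 * w * F w * r - F w * w * ((4 - w) / r) - 4 * t * A t"
      unfolding N'_def w_def[symmetric] r_def[symmetric] using rp
      by (simp add: field_simps power2_eq_square w_def)
    also have "(4 - w) / r = r" using r2 rp by (simp add: field_simps)
    also note ode
    finally show ?thesis unfolding N_def w_def[symmetric] r_def[symmetric] by (simp add: algebra_simps)
  qed
  have dQ: "((\<lambda>t. N t / t) has_real_derivative 0) (at t)" if t: "t \<in> {0<..<2}" for t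
  proof -
    have dNt: "(N has_real_derivative N' t) (at t)" using t by (intro dN) auto
    have d1: "((\<lambda>t. N t / t) has_real_derivative (N' t * t - N t * 1) / (t * t)) (at t)"
      using t by (intro DERIV_divide[OF dNt DERIV_ident]) auto
    have rt: "t * N' t = N t" using t by (intro rel) auto
    have "N' t * t - N t * 1 = 0"
      by (simp only: mult.commute[of "N' t"] mult_1_right rt diff_self)
    then have "(N' t * t - N t * 1) / (t * t) = 0" by (simp only: div_0)
    then show "((\<lambda>t. N t / t) has_real_derivative 0) (at t)" using d1 by (simp only:)
  qed
  define c where "c = N 1 / 1"
  have c: "\<forall>t\<in>{0<..<2}. N t / t = c"
  proof
    fix t :: real assume t: "t \<in> {0<..<2}"
    show "N t / t = c" unfolding c_def
      by (rule DERIV_isconst3[of 0 2 t 1 "\<lambda>t. N t / t"]) (use t dQ in auto)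
  qed
  have N0: "N 0 = 0" unfolding N_def by (simp add: F0 A0)
  have N'0: "N' 0 = 0" unfolding N'_def by (simp add: A0)
  have "((\<lambda>y. (N y - N 0) / (y - 0)) \<longlongrightarrow> N' 0) (at 0)"
    using dN[of 0] unfolding has_field_derivative_iff by simp
  then have lim: "((\<lambda>y. N y / y) \<longlongrightarrow> 0) (at_right 0)"
    unfolding N0 N'0 by (auto intro: tendsto_within_subset)
  have ev: "eventually (\<lambda>y. N y / y = c) (at_right 0)"
    using eventually_at_right_real[of 0 2] c by (auto elim!: eventually_mono)
  have "((\<lambda>y. c) \<longlongrightarrow> 0) (at_right (0::real))"
    using iffD1[OF tendsto_cong[OF ev] lim] .
  then have "c = 0" by (simp add: tendsto_const_iff)
  then have "N s = 0" using c s by auto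
  moreover have "4 - e * s^2 > 0" "sqrt (4 - e * s^2) > 0" using pos[of s] s by auto
  ultimately have "F (e * s^2) = (4 * sqrt (4 - e * s^2) + 4 * s * A s) / ((4 - e * s^2) * sqrt (4 - e * s^2))"
  proof -
    define P where "P = 4 - e * s^2"
    define r where "r = sqrt (4 - e * s^2)"
    have "P > 0" "r > 0" using \<open>4 - e * s^2 > 0\<close> \<open>sqrt (4 - e * s^2) > 0\<close> unfolding P_def r_def by auto
    have "F (e * s^2) * P * r - 4 * r - 4 * s * A s = 0" using \<open>N s = 0\<close> unfolding N_def P_def r_def .
    then have "F (e * s^2) * (P * r) = 4 * r + 4 * s * A s" by (simp add: algebra_simps)
    then have "F (e * s^2) = (4 * r + 4 * s * A s) / (P * r)" using \<open>P > 0\<close> \<open>r > 0\<close>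
      by (simp add: eq_divide_eq)
    then show ?thesis unfolding P_def r_def .
  qed
  also have "\<dots> = 4/(4-e* s^2) + 4* s*A s/((4 - e* s^2)* sqrt(4-e* s^2))"
    using \<open>sqrt (4 - e * s^2) > 0\<close> by (simp add: add_divide_distrib)
  finally show ?thesis .
qed


lemma sums_FG:
  assumes w: "\<bar>w\<bar> < 4"
  shows "(\<lambda>n. (c * real n + d) * a n * w^n) sums (c * (w * D w) + d * F w)"
proof -
  have sF: "(\<lambda>n. a n * w^n) sums F w" unfolding F_def using summ_a[OF w] by (simp add: summable_sums)
  have sD: "(\<lambda>n. diffs a n * w^n) sums D w" unfolding D_def
    using termdiff_converges[of w 4 a] summ_a w by (simp add: summable_sums)
  define G where "G n = real n * a n * w^n" for n
  have "G (Suc n) = w * (diffs a n * w^n)" for n unfolding G_def diffs_def by (simp add: algebra_simps)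
  then have "(\<lambda>n. G (Suc n)) sums (w * D w)" using sums_mult[OF sD, of w] by simp
  then have sG: "G sums (w * D w)" using sums_Suc_iff[of G] by (simp add: G_def)
  have "(\<lambda>n. c * G n + d * (a n * w^n)) sums (c * (w * D w) + d * F w)"
    by (intro sums_add sums_mult sG sF)
  then show ?thesis unfolding G_def by (simp add: algebra_simps)
qed

lemma sums_even_part:
  fixes f :: "nat \<Rightarrow> real"
  assumes "f sums A" "(\<lambda>n. (-1)^n * f n) sums B"
  shows "(\<lambda>k. f (2*k)) sums ((A + B) / 2)"
proof -
  define g where "g n = (f n + (-1)^n * f n) / 2" for n
  have "g sums ((A + B) / 2)" unfolding g_def by (intro sums_divide sums_add assms)
  from sums_group[OF this, of 2] have "(\<lambda>n. sum g {n * 2..<n * 2 + 2}) sums ((A + B) / 2)" by simp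
  moreover have "sum g {n * 2..<n * 2 + 2} = f (2*n)" for n
  proof -
    have "{n * 2..<n * 2 + 2} = {2*n, Suc (2*n)}" by auto
    then show ?thesis unfolding g_def by simp
  qed
  ultimately show ?thesis by simp
qed

lemma series_even:
  assumes z: "\<bar>z\<bar> < 4"
  shows "(\<lambda>k. (c*real(2*k)+d) * a(2*k) * z^(2*k)) sums
           ((c*(z*D z) + d*F z + (c*((-z)*D(-z)) + d*F(-z)))/2)"
proof -
  have h1: "(\<lambda>n. (c * real n + d) * a n * z^n) sums (c * (z * D z) + d * F z)"
    by (rule sums_FG[OF z])
  have h2: "(\<lambda>n. (c * real n + d) * a n * (-z)^n) sums (c * ((-z) * D (-z)) + d * F (-z))"
    by (rule sums_FG) (use z in simp)
  have eqn: "(-1)^n * ((c * real n + d) * a n * z^n) = (c * real n + d) * a n * (-z)^n" for n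
    unfolding power_minus[of z] by (simp only: mult_ac)
  have h3: "(\<lambda>n. (-1)^n * ((c * real n + d) * a n * z^n)) sums (c * ((-z) * D (-z)) + d * F (-z))"
    unfolding eqn by (rule h2)
  show ?thesis using sums_even_part[OF h1 h3] .
qed


lemma F_pos:
  assumes x: "x > 1/4"
  shows "F (1/x) = 4*x/(4*x-1) + 4*x*arctan (1 / sqrt (4*x-1)) / (sqrt (4*x-1))^3"
proof -
  define q where "q = sqrt x"
  define v where "v = sqrt (4*x-1)"
  have q: "q > 0" "q^2 = x" unfolding q_def using x by auto
  have xp: "x > 0" using x by simp
  have v: "v > 0" "v^2 = 4*x-1" unfolding v_def using x by auto
  have q2: "q > 1/2"
  proof -
    have "sqrt (1/4) < sqrt x" using x by (simp only: real_sqrt_less_iff)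
    moreover have "sqrt (1/4::real) = 1/2" by (simp add: real_sqrt_divide)
    ultimately show ?thesis unfolding q_def by simp
  qed
  have dA: "((\<lambda>s. arcsin (s/2)) has_real_derivative (1 / sqrt (4 - 1 * t^2))) (at t)"
    if t: "0 \<le> t" "t < 2" for t
  proof -
    have "- 1 < t/2" "t/2 < 1" using t by auto
    note da = DERIV_arcsin[OF this]
    have dg: "((\<lambda>s. s/2) has_real_derivative (1/2)) (at t)" by (auto intro!: derivative_eq_intros)
    have "((\<lambda>s. arcsin (s/2)) has_real_derivative (inverse (sqrt (1 - (t/2)\<^sup>2)) * (1/2))) (at t)"
      using DERIV_chain2[where g="\<lambda>s. s/2", OF da dg] by simp
    moreover have "sqrt (1 - (t/2)\<^sup>2) = sqrt (4 - 1 * t^2) / 2"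
    proof -
      have "1 - (t/2)\<^sup>2 = (4 - 1 * t^2) / 4" by (simp add: field_simps power2_eq_square)
      then have "sqrt (1 - (t/2)\<^sup>2) = sqrt ((4 - 1 * t^2) / 4)" by (rule arg_cong)
      also have "\<dots> = sqrt (4 - 1 * t^2) / sqrt 4" by (rule real_sqrt_divide)
      also have "sqrt (4::real) = 2" by simp
      finally show ?thesis .
    qed
    ultimately show ?thesis by (simp add: divide_simps)
  qed
  have s: "0 < 1/q" "1/q < 2" using q q2 by (auto simp: field_simps)
  have K: "F (1 * (1/q)^2) = 4/(4-1* (1/q)^2) + 4* (1/q)*arcsin ((1/q)/2)/((4 - 1* (1/q)^2)* sqrt(4-1* (1/q)^2))"
    by (rule key[where A="\<lambda>s. arcsin (s/2)", OF _ _ dA s]) auto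
  have e1: "1 * (1/q)^2 = 1/x" using q by (simp add: power_divide)
  have e2: "4 - 1/x = (v/q)^2" using q v xp by (simp add: field_simps)
  have e3: "sqrt (4 - 1/x) = v/q" unfolding e2 using q v by simp
  have e4: "arcsin ((1/q)/2) = arctan (1/v)"
  proof -
    have "arcsin ((1/q)/2) = arctan ((1/q)/2 / sqrt (1 - ((1/q)/2)^2))"
      using q q2 by (intro arcsin_arctan) (auto simp: field_simps)
    moreover have "1 - ((1/q)/2)^2 = (v / (2*q))^2" using q v xp by (simp add: field_simps)
    moreover have "sqrt ((v / (2*q))^2) = v/(2*q)" using q v by simp
    ultimately show ?thesis using q v xp by (simp add: field_simps)
  qed
  have "F (1/x) = 4/((v/q)^2) + 4*(1/q)*arctan (1/v)/((v/q)^2 * (v/q))"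
    using K[unfolded e1, unfolded e3, unfolded e2, unfolded e4] .
  also have "\<dots> = 4*x/v^2 + 4*x*arctan (1/v) / v^3"
    using q v xp by (simp add: field_simps) (simp add: numeral_eq_Suc)
  also have "v^2 = 4*x-1" by (rule v(2))
  finally show ?thesis unfolding v_def .
qed


lemma F_neg:
  assumes x: "x > 1/4"
  shows "F (-1/x) = 4*x/(4*x+1) - 4*x*(ln ((sqrt (4*x+1) + 1) / (sqrt (4*x+1) - 1)) / 2) / (sqrt (4*x+1))^3"
proof -
  define q where "q = sqrt x"
  define u where "u = sqrt (4*x+1)"
  have q: "q > 0" "q^2 = x" unfolding q_def using x by auto
  have xp: "x > 0" using x by simp
  have u: "u > 0" "u^2 = 4*x+1" unfolding u_def using x by auto
  have u1: "u > 1"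
  proof -
    have "sqrt 1 < sqrt (4*x+1)" using x by (simp only: real_sqrt_less_iff)
    then show ?thesis unfolding u_def by simp
  qed
  have q2: "q > 1/2"
  proof -
    have "sqrt (1/4) < sqrt x" using x by (simp only: real_sqrt_less_iff)
    moreover have "sqrt (1/4::real) = 1/2" by (simp add: real_sqrt_divide)
    ultimately show ?thesis unfolding q_def by simp
  qed
  have dA: "((\<lambda>s. - arsinh (s/2)) has_real_derivative ((-1) / sqrt (4 - (-1) * t^2))) (at t)"
    if t: "0 \<le> t" "t < 2" for t
  proof -
    note da = arsinh_real_has_field_derivative[of "t/2" UNIV]
    have dg: "((\<lambda>s. s/2) has_real_derivative (1/2)) (at t)" by (auto intro!: derivative_eq_intros)
    have "((\<lambda>s. arsinh (s/2)) has_real_derivative (1 / sqrt ((t/2)^2 + 1) * (1/2))) (at t)"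
      using DERIV_chain2[where g="\<lambda>s. s/2", OF da dg] by simp
    then have d1: "((\<lambda>s. - arsinh (s/2)) has_real_derivative - (1 / sqrt ((t/2)^2 + 1) * (1/2))) (at t)"
      by (rule DERIV_minus)
    moreover have "sqrt ((t/2)^2 + 1) = sqrt (4 - (-1) * t^2) / 2"
    proof -
      have "(t/2)^2 + 1 = (4 - (-1) * t^2) / 4" by (simp add: field_simps power2_eq_square)
      then have "sqrt ((t/2)^2 + 1) = sqrt ((4 - (-1) * t^2) / 4)" by (rule arg_cong)
      also have "\<dots> = sqrt (4 - (-1) * t^2) / sqrt 4" by (rule real_sqrt_divide)
      also have "sqrt (4::real) = 2" by simp
      finally show ?thesis .
    qed
    ultimately show ?thesis by (simp add: divide_simps)
  qed
  have s: "0 < 1/q" "1/q < 2" using q q2 by (auto simp: field_simps)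
  have K: "F (-1 * (1/q)^2) = 4/(4- -1* (1/q)^2) + 4* (1/q)*(- arsinh ((1/q)/2))/((4 - -1* (1/q)^2)* sqrt(4- -1* (1/q)^2))"
    by (rule key[where A="\<lambda>s. - arsinh (s/2)", OF _ _ dA s]) auto
  have e1: "-1 * (1/q)^2 = -1/x" using q by (simp add: power_divide)
  have e2: "4 - -1/x = (u/q)^2" using q u xp by (simp add: field_simps)
  have e3: "sqrt (4 - -1/x) = u/q" unfolding e2 using q u by simp
  have e4: "arsinh ((1/q)/2) = ln ((u + 1) / (u - 1)) / 2"
  proof -
    have "((1/q)/2)^2 + 1 = (u/(2*q))^2" using q u xp by (simp add: field_simps)
    then have "sqrt (((1/q)/2)^2 + 1) = u/(2*q)" using q u by simp
    then have "arsinh ((1/q)/2) = ln ((1 + u)/(2*q))" unfolding arsinh_real_def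
      by (simp add: add_divide_distrib mult.commute)
    also have "\<dots> = ln (((1 + u)/(2*q))^2) / 2" using q u by (simp add: ln_realpow)
    also have "((1 + u)/(2*q))^2 = (u + 1) / (u - 1)"
    proof -
      have "(u - 1) * (u + 1) = 4 * q^2" using u q by (simp add: algebra_simps power2_eq_square)
      then show ?thesis using q u1 by (simp add: field_simps power2_eq_square)
    qed
    finally show ?thesis .
  qed
  have "F (-1/x) = 4/((u/q)^2) + 4*(1/q)*(- (ln ((u + 1) / (u - 1)) / 2))/((u/q)^2 * (u/q))"
    using K[unfolded e1, unfolded e3, unfolded e2, unfolded e4] .
  also have "\<dots> = 4*x/u^2 - 4*x*(ln ((u + 1) / (u - 1)) / 2) / u^3"
  proof -
    have gen: "4/((u/q)^2) + 4*(1/q)*(- L)/((u/q)^2 * (u/q)) = 4*x/u^2 - 4*x*L / u^3" for L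
      using q(1) q(2) u(1) xp by (simp add: field_simps) (simp add: numeral_eq_Suc)
    show ?thesis by (rule gen)
  qed
  also have "u^2 = 4*x+1" by (rule u(2))
  finally show ?thesis unfolding u_def .
qed

lemma alg1:
  fixes v T Dp Fp x :: real
  assumes v: "v > 0" and x: "x = (v^2+1)/4" and hp: "(4 - 1/x) * Dp = (1/x + 2) * Fp - 2"
    and fp: "Fp = 4 * x/v^2 + 4 * x * T/v^3"
  shows "((4 * x+1) * Dp + (1-2 * x) * Fp + (-2 * x))/2 = 8 * x^2/(v^2)^2 * (3/v * T - 4 * x + 4)"
proof -
  have "0 < v^2 + 1" using zero_le_power2[of v] by linarith
  then have xp: "x > 0" using x by simp
  have "x * ((4 - 1/x) * Dp) = x * ((1/x + 2) * Fp - 2)" using hp by simp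
  then have "(4 * x - 1) * Dp = (1 + 2 * x) * Fp - 2 * x" using xp by (simp add: algebra_simps)
  moreover have e: "4 * x - 1 = v^2" using x by simp
  ultimately have "v^2 * Dp = (1 + 2 * x) * Fp - 2 * x" by simp
  then have Dp: "Dp = ((1 + 2 * x) * Fp - 2 * x) / v^2" using v by (simp add: field_simps)
  show ?thesis unfolding Dp fp x using v by (simp add: field_simps) algebra
qed
lemma alg2:
  fixes x Dm Fm :: real
  assumes xp: "x > 0" and hm: "(4 + 1/x) * Dm = (2 - 1/x) * Fm - 2"
  shows "(4 * x+1) * Dm + (1-2 * x) * Fm = -2 * x"
proof -
  have "x * ((4 + 1/x) * Dm) = x * ((2 - 1/x) * Fm - 2)" using hm by simp
  then have "(4 * x + 1) * Dm = (2 * x - 1) * Fm - 2 * x" using xp by (simp add: algebra_simps)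
  then show ?thesis by (simp add: algebra_simps)
qed
lemma alg3:
  fixes u L Dp Fp Dm Fm x :: real
  assumes u: "u > 0" and x: "x = (u^2-1)/4" and xp: "x > 0" and hp: "(4 - 1/x) * Dp = (1/x + 2) * Fp - 2"
    and hm: "(4 + 1/x) * Dm = (2 - 1/x) * Fm - 2"
    and fm: "Fm = 4 * x/u^2 - 4 * x * L/u^3"
  shows "((4 * x-1) * Dp + (-2 * x-1) * Fp + ((4 * x-1) * Dm + (-2 * x-1) * Fm))/2 = 8 * x^2/(u^2)^2 * (3 * (u * L)/u^2 - 4 * x - 4)"
proof -
  have "x * ((4 - 1/x) * Dp) = x * ((1/x + 2) * Fp - 2)" using hp by simp
  then have "(4 * x - 1) * Dp = (1 + 2 * x) * Fp - 2 * x" using xp by (simp add: algebra_simps)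
  then have P: "(4 * x-1) * Dp + (-2 * x-1) * Fp = -2 * x" by (simp add: algebra_simps)
  have "x * ((4 + 1/x) * Dm) = x * ((2 - 1/x) * Fm - 2)" using hm by simp
  then have "(4 * x + 1) * Dm = (2 * x - 1) * Fm - 2 * x" using xp by (simp add: algebra_simps)
  moreover have e: "4 * x + 1 = u^2" using x by simp
  ultimately have "u^2 * Dm = (2 * x - 1) * Fm - 2 * x" by simp
  then have Dm: "Dm = ((2 * x - 1) * Fm - 2 * x) / u^2" using u by (simp add: field_simps)
  have "((4 * x-1) * Dp + (-2 * x-1) * Fp + ((4 * x-1) * Dm + (-2 * x-1) * Fm))/2 = (-2 * x + ((4 * x-1) * Dm + (-2 * x-1) * Fm))/2"
    using P by simp
  also have "\<dots> = 8 * x^2/(u^2)^2 * (3 * (u * L)/u^2 - 4 * x - 4)"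
    unfolding Dm fm x using u by (simp add: field_simps) algebra
  finally show ?thesis .
qed

lemma term_eq:
  assumes xp: "x > 0"
  shows "(c * real(2 * k)+d) * a(2 * k) * (1/x)^(2 * k) = (c * real(2 * k)+d) / (x^(2 * k) * real ((4 * k) choose (2 * k)))"
proof -
  have "2 * (2 * k) = 4 * k" by simp
  then have "a (2 * k) = 1 / real ((4 * k) choose (2 * k))" unfolding a_def by simp
  then show ?thesis using xp by (simp add: power_one_over)
qed

lemma formula1:
  assumes x: "x > 1/4"
  shows "(\<lambda>k. (2 * (4 * x+1) * real k - 2 * x + 1) / (x^(2 * k) * real ((4 * k) choose (2 * k))))
        sums (8 * x^2/(4 * x-1)^2 * (3 / sqrt (4 * x-1) * arccot (sqrt (4 * x-1)) - 4 * x + 4))"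
proof -
  have xp: "x > 0" using x by simp
  define z where "z = 1/x"
  have z4: "\<bar>z\<bar> < 4" "\<bar>-z\<bar> < 4" unfolding z_def using x xp by (auto simp: field_simps)
  define v where "v = sqrt (4 * x-1)"
  have v: "v > 0" "v^2 = 4 * x-1" unfolding v_def using x by auto
  have xv: "x = (v^2+1)/4" using v by simp
  have S: "(\<lambda>k. ((4 * x+1) * real(2 * k)+(1-2 * x)) * a(2 * k) * z^(2 * k)) sums
           (((4 * x+1) * (z * D z) + (1-2 * x) * F z + ((4 * x+1) * ((-z) * D(-z)) + (1-2 * x) * F(-z)))/2)"
    by (rule series_even[OF z4(1)])
  have tm: "((4 * x+1) * real(2 * k)+(1-2 * x)) * a(2 * k) * z^(2 * k) = (2 * (4 * x+1) * real k - 2 * x + 1) / (x^(2 * k) * real ((4 * k) choose (2 * k)))" for k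
    unfolding z_def term_eq[OF xp] by (simp add: algebra_simps)
  have hp: "(4 - 1/x) * (z * D z) = (1/x + 2) * F z - 2"
    using F_ode[OF z4(1)] unfolding z_def by (simp add: algebra_simps)
  have hm: "(4 + 1/x) * ((-z) * D(-z)) = (2 - 1/x) * F(-z) - 2"
    using F_ode[OF z4(2)] unfolding z_def by (simp add: algebra_simps)
  have fp: "F z = 4 * x/v^2 + 4 * x * arctan (1/v)/v^3"
    unfolding z_def F_pos[OF x] v_def[symmetric] v(2) ..
  note A1 = alg1[OF v(1) xv hp fp]
  note A2 = alg2[OF xp hm]
  have "((4 * x+1) * (z * D z) + (1-2 * x) * F z + ((4 * x+1) * ((-z) * D(-z)) + (1-2 * x) * F(-z)))/2
      = 8 * x^2/(v^2)^2 * (3/v * arctan (1/v) - 4 * x + 4)"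
    unfolding A2 using A1 by simp
  also have "\<dots> = 8 * x^2/(4 * x-1)^2 * (3 / sqrt (4 * x-1) * arccot (sqrt (4 * x-1)) - 4 * x + 4)"
    unfolding v(2) unfolding v_def arccot_def by simp
  finally have V: "((4 * x+1) * (z * D z) + (1-2 * x) * F z + ((4 * x+1) * ((-z) * D(-z)) + (1-2 * x) * F(-z)))/2 = 8 * x^2/(4 * x-1)^2 * (3 / sqrt (4 * x-1) * arccot (sqrt (4 * x-1)) - 4 * x + 4)" .
  show ?thesis using S unfolding tm V .
qed


lemma formula2:
  assumes x: "x > 1/4"
  shows "(\<lambda>k. (2 * (4 * x-1) * real k - 2 * x - 1) / (x^(2 * k) * real ((4 * k) choose (2 * k))))
        sums (8 * x^2/(4 * x+1)^2 * (3 * R (4 * x+1) / (4 * x+1) - 4 * x - 4))"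
proof -
  have xp: "x > 0" using x by simp
  define z where "z = 1/x"
  have z4: "\<bar>z\<bar> < 4" "\<bar>-z\<bar> < 4" unfolding z_def using x xp by (auto simp: field_simps)
  define u where "u = sqrt (4 * x+1)"
  have u: "u > 0" "u^2 = 4 * x+1" unfolding u_def using x by auto
  have xu: "x = (u^2-1)/4" using u by simp
  define L where "L = ln ((u + 1) / (u - 1)) / 2"
  have S: "(\<lambda>k. ((4 * x-1) * real(2 * k)+(-2 * x-1)) * a(2 * k) * z^(2 * k)) sums
           (((4 * x-1) * (z * D z) + (-2 * x-1) * F z + ((4 * x-1) * ((-z) * D(-z)) + (-2 * x-1) * F(-z)))/2)"
    by (rule series_even[OF z4(1)])
  have tm: "((4 * x-1) * real(2 * k)+(-2 * x-1)) * a(2 * k) * z^(2 * k) = (2 * (4 * x-1) * real k - 2 * x - 1) / (x^(2 * k) * real ((4 * k) choose (2 * k)))" for k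
    unfolding z_def term_eq[OF xp] by (simp add: algebra_simps)
  have hp: "(4 - 1/x) * (z * D z) = (1/x + 2) * F z - 2"
    using F_ode[OF z4(1)] unfolding z_def by (simp add: algebra_simps)
  have hm: "(4 + 1/x) * ((-z) * D(-z)) = (2 - 1/x) * F(-z) - 2"
    using F_ode[OF z4(2)] unfolding z_def by (simp add: algebra_simps)
  have fm: "F (-z) = 4 * x/u^2 - 4 * x * L/u^3"
  proof -
    have "F (-z) = F (-1/x)" unfolding z_def by simp
    also have "\<dots> = 4 * x/(4 * x+1) - 4 * x * (ln ((sqrt (4 * x+1) + 1) / (sqrt (4 * x+1) - 1)) / 2) / (sqrt (4 * x+1))^3"
      by (rule F_neg[OF x])
    also have "\<dots> = 4 * x/u^2 - 4 * x * L/u^3" unfolding u_def[symmetric] u(2) L_def ..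
    finally show ?thesis .
  qed
  note A3 = alg3[OF u(1) xu xp hp hm fm]
  have R: "R (4 * x+1) = u * L"
    unfolding R_def L_def u_def using xp by simp
  have V: "((4 * x-1) * (z * D z) + (-2 * x-1) * F z + ((4 * x-1) * ((-z) * D(-z)) + (-2 * x-1) * F(-z)))/2
      = 8 * x^2/(4 * x+1)^2 * (3 * R (4 * x+1) / (4 * x+1) - 4 * x - 4)"
    using A3 unfolding R u(2) .
  show ?thesis using S unfolding tm V .
qed


lemma sums_transfer:
  fixes f g :: "nat \<Rightarrow> real"
  assumes "f sums s1" "\<And>k. g k = f k" "s1 = s2"
  shows "g sums s2"
proof -
  have "g = f" using assms(2) by (rule ext)
  then show ?thesis using assms(1,3) by simp
qed

lemma arctan_30: "arctan (1 / sqrt 3) = pi / 6"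
  using arctan_tan[of "pi/6"] tan_30 by (simp add: pi_gt_zero)

lemma arctan_60: "arctan (sqrt 3) = pi / 3"
  using arctan_tan[of "pi/3"] tan_60 by (simp add: pi_gt_zero)

lemma cor1: "(\<lambda>k::nat. (10 * real k - 1) / real ((4 * k) choose (2 * k))) sums (4 * sqrt 3/27 * pi)"
proof (rule sums_transfer[OF formula1[of 1]])
  show "(10 * real k - 1) / real ((4 * k) choose (2 * k)) =
    (2 * (4 * 1+1) * real k - 2 * 1 + 1) / (1^(2 * k) * real ((4 * k) choose (2 * k)))" for k
    by simp
  have s3: "sqrt 3 * sqrt 3 = (3::real)" by simp
  show "8 * 1^2/(4 * 1-1)^2 * (3 / sqrt (4 * 1-1) * arccot (sqrt (4 * 1-1)) - 4 * 1 + 4) = 4 * sqrt 3/27 * pi"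
    unfolding arccot_def using arctan_30 s3 by (simp add: field_simps)
qed simp

lemma cor2: "(\<lambda>k::nat. real k * 4^k / real ((4 * k) choose (2 * k))) sums ((3 * pi+8)/12)"
proof -
  have H: "(\<lambda>k. (2 * (4 * (1/2)+1) * real k - 2 * (1/2) + 1) / ((1/2)^(2 * k) * real ((4 * k) choose (2 * k))))
        sums (8 * (1/2)^2/(4 * (1/2)-1)^2 * (3 / sqrt (4 * (1/2)-1) * arccot (sqrt (4 * (1/2)-1)) - 4 * (1/2) + 4))"
    by (rule formula1) simp
  show ?thesis
  proof (rule sums_transfer[OF sums_divide[OF H, of 6]])
    show "real k * 4^k / real ((4 * k) choose (2 * k)) =
      (2 * (4 * (1/2)+1) * real k - 2 * (1/2) + 1) / ((1/2)^(2 * k) * real ((4 * k) choose (2 * k))) / 6" for k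
    proof -
      have "(1/2::real)^(2 * k) = 1 / 4^k" by (simp add: power_mult power_divide)
      then show ?thesis by (simp add: field_simps)
    qed
    show "8 * (1/2)^2/(4 * (1/2)-1)^2 * (3 / sqrt (4 * (1/2)-1) * arccot (sqrt (4 * (1/2)-1)) - 4 * (1/2) + 4) / 6
      = (3 * pi+8)/12"
      unfolding arccot_def by (simp add: arctan_one field_simps)
  qed
qed

lemma cor3: "(\<lambda>k::nat. (14 * real k + 1) * 9^k / real ((4 * k) choose (2 * k))) sums (24 * pi * sqrt 3 + 64)"
proof -
  have H: "(\<lambda>k. (2 * (4 * (1/3)+1) * real k - 2 * (1/3) + 1) / ((1/3)^(2 * k) * real ((4 * k) choose (2 * k))))
        sums (8 * (1/3)^2/(4 * (1/3)-1)^2 * (3 / sqrt (4 * (1/3)-1) * arccot (sqrt (4 * (1/3)-1)) - 4 * (1/3) + 4))"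
    by (rule formula1) simp
  show ?thesis
  proof (rule sums_transfer[OF sums_mult[OF H, of 3]])
    show "(14 * real k + 1) * 9^k / real ((4 * k) choose (2 * k)) =
      3 * ((2 * (4 * (1/3)+1) * real k - 2 * (1/3) + 1) / ((1/3)^(2 * k) * real ((4 * k) choose (2 * k))))" for k
    proof -
      have "(1/3::real)^(2 * k) = 1 / 9^k" by (simp add: power_mult power_divide)
      then show ?thesis by (simp add: field_simps)
    qed
    have e1: "4 * (1/3) - 1 = (1/3::real)" by simp
    have e2: "sqrt (1/3::real) = 1 / sqrt 3" by (simp add: real_sqrt_divide)
    have s3: "sqrt 3 * sqrt 3 = (3::real)" by simp
    show "3 * (8 * (1/3)^2/(4 * (1/3)-1)^2 * (3 / sqrt (4 * (1/3)-1) * arccot (sqrt (4 * (1/3)-1)) - 4 * (1/3) + 4))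
      = 24 * pi * sqrt 3 + 64"
      unfolding arccot_def e1 e2 using arctan_60 s3 by (simp add: field_simps)
  qed
qed

lemma cor4: "(\<lambda>k::nat. (22 * real k - 1) * 9^k / (4^k * real ((4 * k) choose (2 * k))))
        sums (32/25 * (4 + 27 / sqrt 15 * arctan (sqrt (3/5))))"
proof -
  have H: "(\<lambda>k. (2 * (4 * (2/3)+1) * real k - 2 * (2/3) + 1) / ((2/3)^(2 * k) * real ((4 * k) choose (2 * k))))
        sums (8 * (2/3)^2/(4 * (2/3)-1)^2 * (3 / sqrt (4 * (2/3)-1) * arccot (sqrt (4 * (2/3)-1)) - 4 * (2/3) + 4))"
    by (rule formula1) simp
  show ?thesis
  proof (rule sums_transfer[OF sums_mult[OF H, of 3]])
    show "(22 * real k - 1) * 9^k / (4^k * real ((4 * k) choose (2 * k))) =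
      3 * ((2 * (4 * (2/3)+1) * real k - 2 * (2/3) + 1) / ((2/3)^(2 * k) * real ((4 * k) choose (2 * k))))" for k
    proof -
      have pk: "(2/3::real)^(2 * k) = 4^k / 9^k" by (simp add: power_mult power_divide)
      show ?thesis unfolding pk by (simp add: field_simps)
    qed
    have e1: "4 * (2/3) - 1 = (5/3::real)" by simp
    have e2: "1 / sqrt (5/3::real) = sqrt (3/5)" by (simp add: real_sqrt_divide)
    have e3: "3 / sqrt (5/3::real) = 3 * sqrt (3/5)" using e2 by (metis times_divide_eq_right mult_1_right)
    have e4: "27 / sqrt 15 = 9 * sqrt (3/5::real)"
    proof -
      have "sqrt (15::real) = sqrt 3 * sqrt 5" by (simp flip: real_sqrt_mult)
      moreover have "sqrt (3/5::real) = sqrt 3 / sqrt 5" by (simp add: real_sqrt_divide)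
      moreover have "sqrt 3 * sqrt 3 = (3::real)" by simp
      ultimately show ?thesis by (simp add: field_simps)
    qed
    show "3 * (8 * (2/3)^2/(4 * (2/3)-1)^2 * (3 / sqrt (4 * (2/3)-1) * arccot (sqrt (4 * (2/3)-1)) - 4 * (2/3) + 4))
      = 32/25 * (4 + 27 / sqrt 15 * arctan (sqrt (3/5)))"
      unfolding arccot_def e1 e2 e3 e4 by (simp add: field_simps)
  qed
qed

lemma cor5: "(\<lambda>k::nat. (14 * real k - 5) / (4^k * real ((4 * k) choose (2 * k)))) sums (16/81 * (ln 2 - 24))"
proof (rule sums_transfer[OF formula2[of 2]])
  show "(14 * real k - 5) / (4^k * real ((4 * k) choose (2 * k))) =
    (2 * (4 * 2-1) * real k - 2 * 2 - 1) / (2^(2 * k) * real ((4 * k) choose (2 * k)))" for k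
    by (simp add: power_mult)
  have s9: "sqrt (9::real) = 3" using real_sqrt_abs[of 3] by simp
  have "R 9 = 3/2 * ln 2" unfolding R_def s9 by simp
  then show "8 * 2^2/(4 * 2+1)^2 * (3 * R (4 * 2+1) / (4 * 2+1) - 4 * 2 - 4) = 16/81 * (ln 2 - 24)"
    by simp
qed simp

theorem theorem1p2:
  shows "(\<forall>x::real. x > 1/4 \<longrightarrow>
      ((\<lambda>k::nat. (2*(4*x+1)*real k - 2*x + 1) / (x^(2*k) * real ((4*k) choose (2*k))))
        sums (8*x^2/(4*x-1)^2 * (3 / sqrt (4*x-1) * arccot (sqrt (4*x-1)) - 4*x + 4)))
    \<and> ((\<lambda>k::nat. (2*(4*x-1)*real k - 2*x - 1) / (x^(2*k) * real ((4*k) choose (2*k))))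
        sums (8*x^2/(4*x+1)^2 * (3 * R (4*x+1) / (4*x+1) - 4*x - 4))))
    \<and> ((\<lambda>k::nat. (10*real k - 1) / real ((4*k) choose (2*k))) sums (4*sqrt 3/27*pi))
    \<and> ((\<lambda>k::nat. real k * 4^k / real ((4*k) choose (2*k))) sums ((3*pi+8)/12))
    \<and> ((\<lambda>k::nat. (14*real k + 1) * 9^k / real ((4*k) choose (2*k))) sums (24*pi*sqrt 3 + 64))
    \<and> ((\<lambda>k::nat. (22*real k - 1) * 9^k / (4^k * real ((4*k) choose (2*k))))
        sums (32/25 * (4 + 27 / sqrt 15 * arctan (sqrt (3/5)))))
    \<and> ((\<lambda>k::nat. (14*real k - 5) / (4^k * real ((4*k) choose (2*k))))
        sums (16/81 * (ln 2 - 24)))"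
  by (intro conjI allI impI formula1 formula2 cor1 cor2 cor3 cor4 cor5)

end
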